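(* In the variable-assignment instance below, for every well-formed program $C$ and every $P\subseteq\mathcal S$: if $\mathrm{free}(P)\cap\mathrm{mod}(C)=\emptyset$, then $\vDash\{\Box P\}\ C\ \{\Box P\}$.
   Context: $\mathcal A=\langle U,+,\cdot,\mathbf 0,\mathbf 1\rangle$ is a partial semiring ($+$ commutative, associative, possibly partial, unit $\mathbf 0$; $\cdot$ total, associative, unit $\mathbf 1$; two-sided distributivity; $\mathbf 0$ annihilates), naturally ordered ($u\le v$ iff $\exists w.\,u+w=v$ is a partial order), Scott continuous, with a top element. Infinite sums are suprema of finite partial sums. $\mathcal W(X)$: maps $m:X\to U$ with countable support $\mathrm{supp}(m)=\{x:m(x)\ne\mathbf 0\}$ and defined mass, pointwise operations. $\eta(x)(y)=\mathbf 1$ if $x=y$ else $\mathbf 0$; $f^\dagger(m)(y)=\sum_{x\in\mathrm{supp}(m)}m(x)\cdot f(x)(y)$. States are stores $s\in\mathcal S=\mathsf{Var}\to\mathbb Z$ over a countable set of variables $\mathsf{Var}$. Atomic actions are assignments $x:=E$ with integer expressions $E$ (variables, integer constants, tests, $+,-,\times$) and $[\![x:=E]\!](s)=\eta(s[x\mapsto[\![E]\!](s)])$. Programs: $C::=\mathsf{skip}\mid C_1;C_2\mid C_1+C_2\mid\mathsf{assume}\ e\mid C^{\langle e,e'\rangle}\mid x:=E$, with $e$ a test (Boolean combination of $\mathsf{true},\mathsf{false}$ and arbitrary subsets $t\subseteq\mathcal S$, evaluating to $\mathbf 1$ iff true) or a weight $u\in U$. Semantics: $[\![\mathsf{skip}]\!](s)=\eta(s)$;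 $[\![C_1;C_2]\!](s)=[\![C_2]\!]^\dagger([\![C_1]\!](s))$; $[\![C_1+C_2]\!](s)=[\![C_1]\!](s)+[\![C_2]\!](s)$; $[\![\mathsf{assume}\ e]\!](s)=[\![e]\!](s)\cdot\eta(s)$; $[\![C^{\langle e,e'\rangle}]\!]$ is the least fixed point (pointwise order) of $\Phi(f)(s)=[\![e]\!](s)\cdot f^\dagger([\![C]\!](s))+[\![e']\!](s)\cdot\eta(s)$. Well-formed: semantics total. $\vDash\{\varphi\}C\{\psi\}$ for $\varphi,\psi\subseteq\mathcal W(\mathcal S)$ iff $[\![C]\!]^\dagger(m)\in\psi$ for every $m\in\varphi$. $\Box P=\{m:\mathrm{supp}(m)\subseteq P\}$. $\mathrm{free}(P)=\{x\in\mathsf{Var}:\exists s\in P, v\in\mathbb Z.\ s[x\mapsto v]\notin P\}$. $\mathrm{mod}(\mathsf{skip})=\mathrm{mod}(\mathsf{assume}\ e)=\emptyset$, $\mathrm{mod}(C_1;C_2)=\mathrm{mod}(C_1+C_2)=\mathrm{mod}(C_1)\cup\mathrm{mod}(C_2)$, $\mathrm{mod}(C^{\langle e,e'\rangle})=\mathrm{mod}(C)$, $\mathrm{mod}(x:=E)=\{x\}$. *)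

theory Defs
  imports "HOL-Library.Countable_Set"
begin

class psemiring = zero + one + times +
  fixes pplus :: "'a \<Rightarrow> 'a \<Rightarrow> 'a option"
  assumes pplus_comm: "pplus a b = pplus b a"
    and pplus_zero: "pplus a 0 = Some a"
    and pplus_assoc: "pplus a b = Some ab \<Longrightarrow> pplus ab c = Some abc \<Longrightarrow>
                      \<exists>bc. pplus b c = Some bc \<and> pplus a bc = Some abc"
    and ps_mult_assoc: "(a * b) * c = a * (b * c)"
    and ps_mult_one_left: "1 * a = a"
    and ps_mult_one_right: "a * 1 = a"
    and ps_distrib_left: "pplus b c = Some bc \<Longrightarrow> pplus (a * b) (a * c) = Some (a * bc)"
    and ps_distrib_right: "pplus a b = Some ab \<Longrightarrow> pplus (a * c) (b * c) = Some (ab * c)"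
    and ps_mult_zero_left: "0 * a = 0"
    and ps_mult_zero_right: "a * 0 = 0"
    (* naturally ordered: the relation  u \<le> v iff \<exists>w. u + w = v  is a partial order
       (reflexivity and transitivity follow from the monoid laws; antisymmetry is assumed) *)
    and natord_antisym: "(\<exists>w. pplus u w = Some v) \<Longrightarrow> (\<exists>w. pplus v w = Some u) \<Longrightarrow> u = v"

definition nle :: "'a::psemiring \<Rightarrow> 'a \<Rightarrow> bool" where
  "nle u v \<longleftrightarrow> (\<exists>w. pplus u w = Some v)"

definition is_lub :: "'a::psemiring set \<Rightarrow> 'a \<Rightarrow> bool" where
  "is_lub D s \<longleftrightarrow> (\<forall>d\<in>D. nle d s) \<and> (\<forall>t. (\<forall>d\<in>D. nle d t) \<longrightarrow> nle s t)"

definition directed :: "'a::psemiring set \<Rightarrow> bool" where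
  "directed D \<longleftrightarrow> D \<noteq> {} \<and> (\<forall>a\<in>D. \<forall>b\<in>D. \<exists>c\<in>D. nle a c \<and> nle b c)"

definition lub :: "'a::psemiring set \<Rightarrow> 'a" where
  "lub D = (THE s. is_lub D s)"

class cont_psemiring = psemiring +
  assumes dcpo: "directed D \<Longrightarrow> \<exists>s. is_lub D s"
    and times_cont_left: "directed D \<Longrightarrow> a * lub D = lub ((\<lambda>d. a * d) ` D)"
    and times_cont_right: "directed D \<Longrightarrow> lub D * a = lub ((\<lambda>d. d * a) ` D)"
    and pplus_cont: "directed D \<Longrightarrow> (\<forall>d\<in>D. pplus d a \<noteq> None) \<Longrightarrow>
                       pplus (lub D) a = Some (lub ((\<lambda>d. the (pplus d a)) ` D))"
    and has_top: "\<exists>t. \<forall>u. nle u t"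

inductive fsum :: "('b \<Rightarrow> 'a::psemiring) \<Rightarrow> 'b set \<Rightarrow> 'a \<Rightarrow> bool" for g where
  fsum_empty: "fsum g {} 0"
| fsum_insert: "x \<notin> F \<Longrightarrow> fsum g F u \<Longrightarrow> pplus u (g x) = Some v \<Longrightarrow> fsum g (insert x F) v"

definition psum :: "('b \<Rightarrow> 'a::psemiring) \<Rightarrow> 'b set \<Rightarrow> 'a option" where
  "psum g A =
     (let S = {v. \<exists>F. finite F \<and> F \<subseteq> A \<and> fsum g F v} in
      if (\<forall>F. finite F \<and> F \<subseteq> A \<longrightarrow> (\<exists>v. fsum g F v)) \<and> (\<exists>s. is_lub S s)
      then Some (THE s. is_lub S s) else None)"

definition wsupp :: "('b \<Rightarrow> 'a::zero) \<Rightarrow> 'b set" where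
  "wsupp m = {x. m x \<noteq> 0}"

definition isW :: "('b \<Rightarrow> 'a::psemiring) \<Rightarrow> bool" where
  "isW m \<longleftrightarrow> countable (wsupp m) \<and> psum m (wsupp m) \<noteq> None"

definition eta :: "'b \<Rightarrow> ('b \<Rightarrow> 'a::{zero,one})" where
  "eta x = (\<lambda>y. if x = y then 1 else 0)"

definition wbind :: "('b \<Rightarrow> ('c \<Rightarrow> 'a::psemiring)) \<Rightarrow> ('b \<Rightarrow> 'a) \<Rightarrow> ('c \<Rightarrow> 'a) option" where
  "wbind f m =
     (if \<forall>y. psum (\<lambda>x. m x * f x y) (wsupp m) \<noteq> None
      then (let r = (\<lambda>y. the (psum (\<lambda>x. m x * f x y) (wsupp m))) in
            if isW r then Some r else None)
      else None)"

definition wplus :: "('b \<Rightarrow> 'a::psemiring) \<Rightarrow> ('b \<Rightarrow> 'a) \<Rightarrow> ('b \<Rightarrow> 'a) option" where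
  "wplus m1 m2 =
     (if \<forall>x. pplus (m1 x) (m2 x) \<noteq> None
      then (let r = (\<lambda>x. the (pplus (m1 x) (m2 x))) in if isW r then Some r else None)
      else None)"

definition wscale :: "'a::psemiring \<Rightarrow> ('b \<Rightarrow> 'a) \<Rightarrow> ('b \<Rightarrow> 'a)" where
  "wscale u m = (\<lambda>x. u * m x)"

type_synonym 'v state = "'v \<Rightarrow> int"

datatype 'v test =
    TTrue | TFalse | TAtom "'v state set"
  | TNot "'v test" | TAnd "'v test" "'v test" | TOr "'v test" "'v test"

primrec teval :: "'v test \<Rightarrow> 'v state \<Rightarrow> bool" where
  "teval TTrue s = True"
| "teval TFalse s = False"
| "teval (TAtom T) s = (s \<in> T)"
| "teval (TNot t) s = (\<not> teval t s)"
| "teval (TAnd t1 t2) s = (teval t1 s \<and> teval t2 s)"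
| "teval (TOr t1 t2) s = (teval t1 s \<or> teval t2 s)"

datatype 'v expr =
    EVar 'v | EConst int | ETest "'v test"
  | EPlus "'v expr" "'v expr" | EMinus "'v expr" "'v expr" | ETimes "'v expr" "'v expr"

primrec eeval :: "'v expr \<Rightarrow> 'v state \<Rightarrow> int" where
  "eeval (EVar x) s = s x"
| "eeval (EConst n) s = n"
| "eeval (ETest t) s = (if teval t s then 1 else 0)"
| "eeval (EPlus a b) s = eeval a s + eeval b s"
| "eeval (EMinus a b) s = eeval a s - eeval b s"
| "eeval (ETimes a b) s = eeval a s * eeval b s"

datatype ('v, 'a) guard = GTest "'v test" | GWeight 'a

primrec geval :: "('v, 'a::{zero,one}) guard \<Rightarrow> 'v state \<Rightarrow> 'a" where
  "geval (GTest t) s = (if teval t s then 1 else 0)"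
| "geval (GWeight u) s = u"

datatype ('v, 'a) prog =
    Skip
  | Seq "('v, 'a) prog" "('v, 'a) prog"
  | Choice "('v, 'a) prog" "('v, 'a) prog"
  | Assume "('v, 'a) guard"
  | Loop "('v, 'a) prog" "('v, 'a) guard" "('v, 'a) guard"
  | Assign 'v "'v expr"

type_synonym ('v, 'a) den = "'v state \<Rightarrow> ('v state \<Rightarrow> 'a)"

definition fle :: "('v, 'a::psemiring) den \<Rightarrow> ('v, 'a) den \<Rightarrow> bool" where
  "fle f g \<longleftrightarrow> (\<forall>s t. nle (f s t) (g s t))"

definition phi_step :: "('v, 'a::psemiring) guard \<Rightarrow> ('v, 'a) guard \<Rightarrow> ('v, 'a) den \<Rightarrow>
                         ('v, 'a) den \<Rightarrow> 'v state \<Rightarrow> ('v state \<Rightarrow> 'a) option" where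
  "phi_step e e' c f s =
     (case wbind f (c s) of
        None \<Rightarrow> None
      | Some m \<Rightarrow> wplus (wscale (geval e s) m) (wscale (geval e' s) (eta s)))"

definition phi :: "('v, 'a::psemiring) guard \<Rightarrow> ('v, 'a) guard \<Rightarrow> ('v, 'a) den \<Rightarrow>
                    ('v, 'a) den \<Rightarrow> ('v, 'a) den option" where
  "phi e e' c f =
     (if \<forall>s. phi_step e e' c f s \<noteq> None
      then Some (\<lambda>s. the (phi_step e e' c f s)) else None)"

definition loop_sem :: "('v, 'a::psemiring) guard \<Rightarrow> ('v, 'a) guard \<Rightarrow> ('v, 'a) den \<Rightarrow>
                         ('v, 'a) den option" where
  "loop_sem e e' c =
     (let FP = {f. (\<forall>s. isW (f s)) \<and> phi e e' c f = Some f} in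
      if \<exists>f\<in>FP. \<forall>g\<in>FP. fle f g
      then Some (THE f. f \<in> FP \<and> (\<forall>g\<in>FP. fle f g)) else None)"

text \<open>Denotation of a program; \<open>None\<close> means the semantics is not total.\<close>
fun sem :: "('v, 'a::psemiring) prog \<Rightarrow> ('v, 'a) den option" where
  "sem Skip = Some eta"
| "sem (Seq C1 C2) =
     (case (sem C1, sem C2) of
        (Some c1, Some c2) \<Rightarrow>
          if \<forall>s. wbind c2 (c1 s) \<noteq> None then Some (\<lambda>s. the (wbind c2 (c1 s))) else None
      | _ \<Rightarrow> None)"
| "sem (Choice C1 C2) =
     (case (sem C1, sem C2) of
        (Some c1, Some c2) \<Rightarrow>
          if \<forall>s. wplus (c1 s) (c2 s) \<noteq> None then Some (\<lambda>s. the (wplus (c1 s) (c2 s))) else None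
      | _ \<Rightarrow> None)"
| "sem (Assume e) =
     (if \<forall>s. isW (wscale (geval e s) (eta s))
      then Some (\<lambda>s. wscale (geval e s) (eta s)) else None)"
| "sem (Loop C e e') =
     (case sem C of Some c \<Rightarrow> loop_sem e e' c | None \<Rightarrow> None)"
| "sem (Assign x E) = Some (\<lambda>s. eta (s(x := eeval E s)))"

definition well_formed :: "('v, 'a::psemiring) prog \<Rightarrow> bool" where
  "well_formed C \<longleftrightarrow> sem C \<noteq> None"

definition valid :: "('v state \<Rightarrow> 'a::psemiring) set \<Rightarrow> ('v, 'a) prog \<Rightarrow>
                      ('v state \<Rightarrow> 'a) set \<Rightarrow> bool" where
  "valid \<phi> C \<psi> \<longleftrightarrow>
     (case sem C of
        None \<Rightarrow> False
      | Some c \<Rightarrow> (\<forall>m\<in>\<phi>. case wbind c m of None \<Rightarrow> False | Some m' \<Rightarrow> m' \<in> \<psi>))"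

definition Box :: "'v state set \<Rightarrow> ('v state \<Rightarrow> 'a::psemiring) set" where
  "Box P = {m. isW m \<and> wsupp m \<subseteq> P}"

definition free :: "'v state set \<Rightarrow> 'v set" where
  "free P = {x. \<exists>s\<in>P. \<exists>v::int. s(x := v) \<notin> P}"

primrec modv :: "('v, 'a) prog \<Rightarrow> 'v set" where
  "modv Skip = {}"
| "modv (Assume e) = {}"
| "modv (Seq C1 C2) = modv C1 \<union> modv C2"
| "modv (Choice C1 C2) = modv C1 \<union> modv C2"
| "modv (Loop C e e') = modv C"
| "modv (Assign x E) = {x}"

end

theory Submission
  imports Defs
begin


lemma pplus_assoc_rev:
  fixes a b c :: "'a::psemiring"
  assumes "pplus b c = Some bc" "pplus a bc = Some abc"
  shows "\<exists>ab. pplus a b = Some ab \<and> pplus ab c = Some abc"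
proof -
  have "pplus c b = Some bc" "pplus bc a = Some abc" using assms pplus_comm by metis+
  then obtain ba where "pplus b a = Some ba" "pplus c ba = Some abc" using pplus_assoc by blast
  then show ?thesis using pplus_comm by metis
qed

datatype 'a po = Val 'a | Undef

fun poplus :: "'a::psemiring po \<Rightarrow> 'a po \<Rightarrow> 'a po" where
  "poplus (Val a) (Val b) = (case pplus a b of Some c \<Rightarrow> Val c | None \<Rightarrow> Undef)"
| "poplus _ _ = Undef"

lemma poplus_Undef[simp]: "poplus Undef x = Undef" "poplus x Undef = Undef"
  by (cases x; simp)+

lemma poplus_Val_iff: "poplus (Val a) (Val b) = Val c \<longleftrightarrow> pplus a b = Some c"
  by (cases "pplus a b") auto

lemma poplus_assoc: "poplus (poplus x y) z = poplus x (poplus y z)"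
proof (cases x; cases y; cases z)
  fix a b c assume [simp]: "x = Val a" "y = Val b" "z = Val c"
  show ?thesis
  proof (cases "poplus (poplus x y) z")
    case (Val r)
    then obtain ab where "pplus a b = Some ab" "pplus ab c = Some r"
      by (auto split: option.splits)
    then obtain bc where "pplus b c = Some bc" "pplus a bc = Some r" using pplus_assoc by blast
    then show ?thesis using Val by simp
  next
    case Undef
    show ?thesis
    proof (cases "poplus x (poplus y z)")
      case (Val r)
      then obtain bc where "pplus b c = Some bc" "pplus a bc = Some r"
        by (auto split: option.splits)
      then obtain ab where "pplus a b = Some ab" "pplus ab c = Some r" using pplus_assoc_rev by blast
      then show ?thesis using Undef by simp
    qed (use Undef in simp)
  qed
qed auto

instantiation po :: (psemiring) comm_monoid_add
begin
definition zero_po_def: "0 = Val 0"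
definition plus_po_def: "x + y = poplus x y"
instance proof
  fix a b c :: "'a po"
  show "a + b + c = a + (b + c)" unfolding plus_po_def by (rule poplus_assoc)
  show "a + b = b + a" unfolding plus_po_def by (cases a; cases b) (auto simp: pplus_comm)
  show "0 + a = a" unfolding plus_po_def zero_po_def
    by (cases a) (auto simp: pplus_comm pplus_zero)
qed
end


definition pole :: "'a::psemiring po \<Rightarrow> 'a po \<Rightarrow> bool" where
  "pole p q \<longleftrightarrow> (\<exists>r. p + r = q)"

lemma Undef_add[simp]: "Undef + x = Undef" "x + Undef = Undef"
  by (simp_all add: plus_po_def)

lemma Val_add_Val: "Val a + Val b = (case pplus a b of Some c \<Rightarrow> Val c | None \<Rightarrow> Undef)"
  by (simp add: plus_po_def)

lemma Val_add_eq: "Val a + Val b = Val c \<longleftrightarrow> pplus a b = Some c"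
  by (cases "pplus a b") (auto simp: plus_po_def)

lemma Val_add_ne: "Val a + Val b \<noteq> Undef \<longleftrightarrow> pplus a b \<noteq> None"
  by (auto simp: plus_po_def split: option.splits)

lemma add_ne_Undef: "x + y \<noteq> Undef \<Longrightarrow> x \<noteq> Undef \<and> y \<noteq> Undef"
  by auto

lemma pole_refl: "pole p p"
  unfolding pole_def by (rule exI[of _ 0]) simp

lemma pole_trans: "pole p q \<Longrightarrow> pole q r \<Longrightarrow> pole p r"
  unfolding pole_def by (metis add.assoc)

lemma pole_add_mono: "pole a b \<Longrightarrow> pole c d \<Longrightarrow> pole (a + c) (b + d)"
  unfolding pole_def by (metis add.assoc add.commute)

lemma pole_Undef: "pole p q \<Longrightarrow> q \<noteq> Undef \<Longrightarrow> p \<noteq> Undef"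
  unfolding pole_def by auto

lemma pole_Val: "pole (Val a) (Val b) \<longleftrightarrow> nle a b"
  unfolding pole_def nle_def
proof
  assume "\<exists>r. Val a + r = Val b"
  then obtain r where "Val a + r = Val b" by blast
  then show "\<exists>w. pplus a w = Some b" by (cases r) (auto simp: Val_add_eq)
next
  assume "\<exists>w. pplus a w = Some b"
  then obtain w where "pplus a w = Some b" by blast
  then have "Val a + Val w = Val b" by (simp add: Val_add_eq)
  then show "\<exists>r. Val a + r = Val b" by blast
qed

lemma sum_pole_mono: "(\<And>x. x \<in> F \<Longrightarrow> pole (f x) (g x)) \<Longrightarrow> pole (sum f F) (sum g F)"
proof (induction F rule: infinite_finite_induct)
  case (infinite A) then show ?case by (simp add: pole_refl)
next
  case empty then show ?case by (simp add: pole_refl)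
next
  case (insert x F) then show ?case by (simp add: pole_add_mono)
qed

lemma sum_pole_subset: "finite B \<Longrightarrow> A \<subseteq> B \<Longrightarrow> pole (sum f A) (sum f B)"
  unfolding pole_def by (metis sum.subset_diff add.commute)

lemma nle_refl: "nle u (u::'a::psemiring)"
  unfolding nle_def using pplus_zero by blast

lemma nle_zero: "nle 0 (u::'a::psemiring)"
  unfolding nle_def using pplus_zero pplus_comm by metis

lemma nle_antisym: "nle u v \<Longrightarrow> nle v u \<Longrightarrow> u = (v::'a::psemiring)"
  unfolding nle_def by (rule natord_antisym)

lemma nle_mult_left: "nle u v \<Longrightarrow> nle (a * u) (a * (v::'a::psemiring))"
  unfolding nle_def using ps_distrib_left by blast

lemma nle_mult_right: "nle u v \<Longrightarrow> nle (u * a) (v * (a::'a::psemiring))"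
  unfolding nle_def using ps_distrib_right by blast

abbreviation vs :: "('b \<Rightarrow> 'a::psemiring) \<Rightarrow> 'b set \<Rightarrow> 'a po" where
  "vs g F \<equiv> sum (\<lambda>x. Val (g x)) F"

lemma fsum_vs: "fsum g F v \<longleftrightarrow> finite F \<and> vs g F = Val v"
proof
  assume "fsum g F v"
  then show "finite F \<and> vs g F = Val v"
  proof (induction rule: fsum.induct)
    case fsum_empty then show ?case by (simp add: zero_po_def)
  next
    case (fsum_insert x F u v)
    then show ?case by (simp add: add.commute Val_add_eq)
  qed
next
  assume "finite F \<and> vs g F = Val v"
  then have "finite F" "vs g F = Val v" by auto
  then show "fsum g F v"
  proof (induction F arbitrary: v rule: finite_induct)
    case empty then show ?case by (simp add: zero_po_def fsum_empty)
  next
    case (insert x F)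
    then have e: "Val (g x) + vs g F = Val v" by simp
    then obtain u where u: "vs g F = Val u" by (cases "vs g F") auto
    with e have "pplus u (g x) = Some v" by (simp add: Val_add_eq pplus_comm)
    with insert u show ?case by (blast intro: fsum_insert)
  qed
qed

lemma vs_distrib_left: "vs g F = Val v \<Longrightarrow> vs (\<lambda>x. a * g x) F = Val (a * v)"
proof (induction F arbitrary: v rule: infinite_finite_induct)
  case (infinite A) then show ?case by (simp add: zero_po_def ps_mult_zero_right)
next
  case empty then show ?case by (simp add: zero_po_def ps_mult_zero_right)
next
  case (insert x F)
  then have e: "Val (g x) + vs g F = Val v" by simp
  then obtain u where u: "vs g F = Val u" by (cases "vs g F") auto
  with e have "pplus (g x) u = Some v" by (simp add: Val_add_eq)
  then have "pplus (a * g x) (a * u) = Some (a * v)" by (rule ps_distrib_left)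
  with insert u show ?case by (simp add: Val_add_eq)
qed

lemma vs_distrib_right: "vs g F = Val v \<Longrightarrow> vs (\<lambda>x. g x * a) F = Val (v * a)"
proof (induction F arbitrary: v rule: infinite_finite_induct)
  case (infinite A) then show ?case by (simp add: zero_po_def ps_mult_zero_left)
next
  case empty then show ?case by (simp add: zero_po_def ps_mult_zero_left)
next
  case (insert x F)
  then have e: "Val (g x) + vs g F = Val v" by simp
  then obtain u where u: "vs g F = Val u" by (cases "vs g F") auto
  with e have "pplus (g x) u = Some v" by (simp add: Val_add_eq)
  then have "pplus (g x * a) (u * a) = Some (v * a)" by (rule ps_distrib_right)
  with insert u show ?case by (simp add: Val_add_eq)
qed


definition PS :: "('b \<Rightarrow> 'a::psemiring) \<Rightarrow> 'b set \<Rightarrow> 'a set" where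
  "PS g A = {v. \<exists>F. finite F \<and> F \<subseteq> A \<and> vs g F = Val v}"

lemma psum_alt: "psum g A = (if (\<forall>F. finite F \<and> F \<subseteq> A \<longrightarrow> vs g F \<noteq> Undef) \<and> (\<exists>s. is_lub (PS g A) s)
   then Some (lub (PS g A)) else None)"
proof -
  have 1: "{v. \<exists>F. finite F \<and> F \<subseteq> A \<and> fsum g F v} = PS g A"
    unfolding PS_def fsum_vs by blast
  have 2: "(\<forall>F. finite F \<and> F \<subseteq> A \<longrightarrow> (\<exists>v. fsum g F v)) \<longleftrightarrow> (\<forall>F. finite F \<and> F \<subseteq> A \<longrightarrow> vs g F \<noteq> Undef)"
    unfolding fsum_vs by (metis po.exhaust po.distinct(1))
  show ?thesis unfolding psum_def Let_def 1 2 lub_def by (rule refl)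
qed

lemma is_lub_unique: "is_lub D s \<Longrightarrow> is_lub D t \<Longrightarrow> s = t"
  unfolding is_lub_def by (meson nle_antisym)

lemma lub_eqI: "is_lub D s \<Longrightarrow> lub D = s"
  unfolding lub_def using is_lub_unique by blast

lemma PS_directed:
  assumes "\<forall>F. finite F \<and> F \<subseteq> A \<longrightarrow> vs g F \<noteq> Undef"
  shows "directed (PS g A)"
  unfolding directed_def
proof
  have "0 \<in> PS g A" unfolding PS_def by (rule CollectI, rule exI[of _ "{}"]) (simp add: zero_po_def)
  then show "PS g A \<noteq> {}" by blast
next
  show "\<forall>a\<in>PS g A. \<forall>b\<in>PS g A. \<exists>c\<in>PS g A. nle a c \<and> nle b c"
  proof (intro ballI)
    fix a b assume "a \<in> PS g A" "b \<in> PS g A"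
    then obtain F G where F: "finite F" "F \<subseteq> A" "vs g F = Val a"
      and G: "finite G" "G \<subseteq> A" "vs g G = Val b" unfolding PS_def by blast
    then have "vs g (F \<union> G) \<noteq> Undef" using assms by auto
    then obtain c where c: "vs g (F \<union> G) = Val c" by (cases "vs g (F \<union> G)") auto
    have "c \<in> PS g A" unfolding PS_def using F G c by blast
    moreover have "pole (vs g F) (vs g (F \<union> G))"
      by (rule sum_pole_subset) (use F G in auto)
    moreover have "pole (vs g G) (vs g (F \<union> G))"
      by (rule sum_pole_subset) (use F G in auto)
    ultimately have "nle a c" "nle b c" using F G c pole_Val by metis+
    with \<open>c \<in> PS g A\<close> show "\<exists>c\<in>PS g A. nle a c \<and> nle b c" by blast
  qed
qed

lemma psum_defined:
  fixes g :: "'b \<Rightarrow> 'a::cont_psemiring"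
  shows "psum g A \<noteq> None \<longleftrightarrow> (\<forall>F. finite F \<and> F \<subseteq> A \<longrightarrow> vs g F \<noteq> Undef)"
proof
  assume "psum g A \<noteq> None"
  then show "\<forall>F. finite F \<and> F \<subseteq> A \<longrightarrow> vs g F \<noteq> Undef" unfolding psum_alt[of g A] by meson
next
  assume a: "\<forall>F. finite F \<and> F \<subseteq> A \<longrightarrow> vs g F \<noteq> Undef"
  then have "\<exists>s. is_lub (PS g A) s" using PS_directed dcpo by blast
  then show "psum g A \<noteq> None" unfolding psum_alt[of g A] using a by simp
qed

lemma psum_SomeD:
  fixes g :: "'b \<Rightarrow> 'a::cont_psemiring"
  assumes "psum g A = Some s"
  shows "s = lub (PS g A) \<and> is_lub (PS g A) s \<and> directed (PS g A) \<and> (\<forall>F. finite F \<and> F \<subseteq> A \<longrightarrow> vs g F \<noteq> Undef)"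
proof -
  have d: "\<forall>F. finite F \<and> F \<subseteq> A \<longrightarrow> vs g F \<noteq> Undef" using assms psum_defined by (metis option.distinct(1))
  then have dir: "directed (PS g A)" by (rule PS_directed)
  then obtain t where t: "is_lub (PS g A) t" using dcpo by blast
  then have "s = lub (PS g A)" using assms d unfolding psum_alt[of g A] by (metis option.inject option.distinct(1))
  moreover have "lub (PS g A) = t" using t by (rule lub_eqI)
  ultimately show ?thesis using t d dir by simp
qed

lemma psum_zero:
  assumes "\<forall>x\<in>A. g x = 0"
  shows "psum g A = Some 0"
proof -
  have z: "vs g F = Val 0" if "F \<subseteq> A" for F
  proof -
    have "vs g F = sum (\<lambda>x. 0) F" using that assms by (intro sum.cong) (auto simp: zero_po_def)
    then have "vs g F = 0" by simp
    then show ?thesis by (simp add: zero_po_def)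
  qed
  have PS: "PS g A = {0}" unfolding PS_def using z by (auto intro!: exI[of _ "{}"])
  have l: "is_lub {0} 0" unfolding is_lub_def using nle_refl nle_zero by blast
  have "lub (PS g A) = 0" unfolding PS using l by (rule lub_eqI)
  moreover have "\<forall>F. finite F \<and> F \<subseteq> A \<longrightarrow> vs g F \<noteq> Undef" using z by simp
  moreover have "\<exists>s. is_lub (PS g A) s" using PS l by auto
  ultimately show ?thesis unfolding psum_alt[of g A] by simp
qed

lemma psum_nonzero:
  fixes g :: "'b \<Rightarrow> 'a::psemiring"
  assumes "psum g A = Some v" "v \<noteq> 0"
  shows "\<exists>x\<in>A. g x \<noteq> 0"
  using psum_zero[of A g] assms by auto

lemma psum_cong:
  assumes "\<forall>x\<in>A. g x = h x"
  shows "psum g A = psum h A"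
proof -
  have e: "vs g F = vs h F" if "F \<subseteq> A" for F using that assms by (intro sum.cong) auto
  have "PS g A = PS h A" unfolding PS_def
  proof (intro Collect_cong iffI)
    fix v assume "\<exists>F. finite F \<and> F \<subseteq> A \<and> vs g F = Val v"
    then obtain F where "finite F" "F \<subseteq> A" "vs g F = Val v" by blast
    then show "\<exists>F. finite F \<and> F \<subseteq> A \<and> vs h F = Val v" using e[of F] by metis
  next
    fix v assume "\<exists>F. finite F \<and> F \<subseteq> A \<and> vs h F = Val v"
    then obtain F where "finite F" "F \<subseteq> A" "vs h F = Val v" by blast
    then show "\<exists>F. finite F \<and> F \<subseteq> A \<and> vs g F = Val v" using e[of F] by metis
  qed
  moreover have "(\<forall>F. finite F \<and> F \<subseteq> A \<longrightarrow> vs g F \<noteq> Undef) \<longleftrightarrow> (\<forall>F. finite F \<and> F \<subseteq> A \<longrightarrow> vs h F \<noteq> Undef)"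
    using e by metis
  ultimately show ?thesis unfolding psum_alt[of g A] psum_alt[of h A] by (simp only:)
qed



lemma isW_restrict:
  fixes m :: "'b \<Rightarrow> 'a::cont_psemiring"
  assumes "isW m"
  shows "isW (\<lambda>y. if Q y then m y else 0)"
proof -
  let ?m = "\<lambda>y. if Q y then m y else 0"
  have sub: "wsupp ?m \<subseteq> wsupp m" unfolding wsupp_def by auto
  have c: "countable (wsupp ?m)" using assms sub unfolding isW_def by (blast intro: countable_subset)
  have "psum m (wsupp m) \<noteq> None" using assms unfolding isW_def by simp
  then have d: "\<forall>F. finite F \<and> F \<subseteq> wsupp m \<longrightarrow> vs m F \<noteq> Undef" unfolding psum_defined .
  have "vs ?m F \<noteq> Undef" if "finite F" "F \<subseteq> wsupp ?m" for F
  proof -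
    have "vs ?m F = vs m F" using that by (intro sum.cong) (auto simp: wsupp_def)
    then show ?thesis using d that sub by auto
  qed
  then have "psum ?m (wsupp ?m) \<noteq> None" unfolding psum_defined by simp
  then show ?thesis using c unfolding isW_def by blast
qed

lemma K:
  fixes m :: "'b \<Rightarrow> 'a::cont_psemiring"
  assumes "psum m A \<noteq> None" "finite F" "F \<subseteq> A"
  shows "vs (\<lambda>x. m x * u x) F \<noteq> Undef"
proof -
  have "vs m F \<noteq> Undef" using assms(1) assms(2,3) unfolding psum_defined by simp
  then obtain M where M: "vs m F = Val M" by (cases "vs m F") auto
  obtain T :: 'a where T: "\<forall>u. nle u T" using has_top by blast
  have MT: "vs (\<lambda>x. m x * T) F = Val (M * T)" using M by (rule vs_distrib_right)
  have "pole (vs (\<lambda>x. m x * u x) F) (vs (\<lambda>x. m x * T) F)"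
  proof (rule sum_pole_mono)
    fix x show "pole (Val (m x * u x)) (Val (m x * T))" unfolding pole_Val using T by (intro nle_mult_left) blast
  qed
  moreover have "vs (\<lambda>x. m x * T) F \<noteq> Undef" using MT by simp
  ultimately show ?thesis by (rule pole_Undef)
qed



lemma L:
  fixes t :: "'b \<Rightarrow> 'c \<Rightarrow> 'a::cont_psemiring"
  assumes rr: "\<And>y. psum (\<lambda>x. t x y) A = Some (r y)"
    and fin: "finite G"
  shows "(\<forall>F. finite F \<and> F \<subseteq> A \<longrightarrow> sum (\<lambda>y. vs (\<lambda>x. t x y) F) G + a \<noteq> Undef) \<Longrightarrow> vs r G + a \<noteq> Undef"
  using fin
proof (induction G arbitrary: a rule: finite_induct)
  case empty
  have "sum (\<lambda>y. vs (\<lambda>x. t x y) {}) {} + a \<noteq> Undef" using empty.prems[rule_format, of "{}"] by simp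
  then show ?case by simp
next
  case (insert y0 G)
  have H': "vs (\<lambda>x. t x y0) F + (sum (\<lambda>y. vs (\<lambda>x. t x y) F) G + a) \<noteq> Undef"
    if "finite F" "F \<subseteq> A" for F
  proof -
    have "vs (\<lambda>x. t x y0) F + sum (\<lambda>y. vs (\<lambda>x. t x y) F) G + a \<noteq> Undef"
      using insert.prems[rule_format, OF conjI[OF that]] unfolding sum.insert[OF insert.hyps(1,2)] .
    then show ?thesis by (simp add: add.assoc)
  qed
  have "sum (\<lambda>y. vs (\<lambda>x. t x y) F) G + (Val (r y0) + a) \<noteq> Undef" if F: "finite F" "F \<subseteq> A" for F
  proof -
    obtain b' where b: "sum (\<lambda>y. vs (\<lambda>x. t x y) F) G + a = Val b'"
    proof -
      have "sum (\<lambda>y. vs (\<lambda>x. t x y) F) G + a \<noteq> Undef" using add_ne_Undef[OF H'[OF F]] by (rule conjunct2)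
      then show ?thesis using that by (cases "sum (\<lambda>y. vs (\<lambda>x. t x y) F) G + a") auto
    qed
    have rl: "r y0 = lub (PS (\<lambda>x. t x y0) A)" and dir: "directed (PS (\<lambda>x. t x y0) A)"
      using psum_SomeD[OF rr[of y0]] by auto
    have "\<forall>d\<in>PS (\<lambda>x. t x y0) A. pplus d b' \<noteq> None"
    proof
      fix d assume "d \<in> PS (\<lambda>x. t x y0) A"
      then obtain F' where F': "finite F'" "F' \<subseteq> A" "vs (\<lambda>x. t x y0) F' = Val d"
        unfolding PS_def by blast
      have F'': "finite (F \<union> F')" "F \<union> F' \<subseteq> A" using F F' by auto
      have p1: "pole (Val d) (vs (\<lambda>x. t x y0) (F \<union> F'))"
        unfolding F'(3)[symmetric] by (rule sum_pole_subset) (use F'' in auto)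
      have "pole (sum (\<lambda>y. vs (\<lambda>x. t x y) F) G) (sum (\<lambda>y. vs (\<lambda>x. t x y) (F \<union> F')) G)"
        by (rule sum_pole_mono, rule sum_pole_subset) (use F'' in auto)
      then have p2: "pole (Val b') (sum (\<lambda>y. vs (\<lambda>x. t x y) (F \<union> F')) G + a)"
        unfolding b[symmetric] by (rule pole_add_mono) (rule pole_refl)
      have "pole (Val d + Val b') (vs (\<lambda>x. t x y0) (F \<union> F') + (sum (\<lambda>y. vs (\<lambda>x. t x y) (F \<union> F')) G + a))"
        using p1 p2 by (rule pole_add_mono)
      then have "Val d + Val b' \<noteq> Undef" using H'[OF F''] by (rule pole_Undef)
      then show "pplus d b' \<noteq> None" by (simp add: Val_add_ne)
    qed
    then have "pplus (r y0) b' \<noteq> None" using pplus_cont[OF dir] rl by simp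
    then have "Val (r y0) + Val b' \<noteq> Undef" by (simp add: Val_add_ne)
    moreover have "sum (\<lambda>y. vs (\<lambda>x. t x y) F) G + (Val (r y0) + a) = Val (r y0) + (sum (\<lambda>y. vs (\<lambda>x. t x y) F) G + a)"
      by (rule add.left_commute)
    ultimately show ?thesis using b by simp
  qed
  then have "vs r G + (Val (r y0) + a) \<noteq> Undef" by (intro insert.IH allI impI) auto
  moreover have "vs r (insert y0 G) + a = vs r G + (Val (r y0) + a)"
    unfolding sum.insert[OF insert.hyps(1,2)] by (simp only: add.assoc add.left_commute)
  ultimately show ?case by simp
qed



lemma wbind_SomeI:
  assumes "\<forall>y. psum (\<lambda>x. m x * f x y) (wsupp m) = Some (r y)" "isW r"
  shows "wbind f m = Some r"
proof -
  have "(\<lambda>y. the (psum (\<lambda>x. m x * f x y) (wsupp m))) = r" using assms(1) by auto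
  then show ?thesis using assms unfolding wbind_def Let_def by auto
qed

lemma wbind_total:
  fixes m :: "'b \<Rightarrow> 'a::cont_psemiring" and c :: "'b \<Rightarrow> 'c \<Rightarrow> 'a"
  assumes m: "isW m" and cW: "\<forall>x\<in>wsupp m. isW (c x)"
  shows "\<exists>r. wbind c m = Some r \<and> (\<forall>y. psum (\<lambda>x. m x * c x y) (wsupp m) = Some (r y))"
proof -
  let ?A = "wsupp m"
  have hm: "psum m ?A \<noteq> None" using m unfolding isW_def by blast
  have defd: "vs (\<lambda>x. m x * c x y) F \<noteq> Undef" if "finite F" "F \<subseteq> ?A" for F y
    using K[OF hm that] .
  then have pd: "psum (\<lambda>x. m x * c x y) ?A \<noteq> None" for y unfolding psum_defined by blast
  define r where "r y = the (psum (\<lambda>x. m x * c x y) ?A)" for y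
  have rr: "psum (\<lambda>x. m x * c x y) ?A = Some (r y)" for y using pd[of y] unfolding r_def by auto
  have sub: "wsupp r \<subseteq> (\<Union>x\<in>?A. wsupp (c x))"
  proof
    fix y assume "y \<in> wsupp r"
    then have "r y \<noteq> 0" unfolding wsupp_def by simp
    then obtain x where "x \<in> ?A" "m x * c x y \<noteq> 0" using psum_nonzero[OF rr] by blast
    then have "c x y \<noteq> 0" using ps_mult_zero_right by metis
    then show "y \<in> (\<Union>x\<in>?A. wsupp (c x))" using \<open>x \<in> ?A\<close> unfolding wsupp_def by blast
  qed
  have "countable (\<Union>x\<in>?A. wsupp (c x))"
    using m cW unfolding isW_def by (intro countable_UN) auto
  then have cr: "countable (wsupp r)" using sub countable_subset by blast
  have "vs r G \<noteq> Undef" if G: "finite G" for G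
  proof -
    have prem: "sum (\<lambda>y. vs (\<lambda>x. m x * c x y) F) G + 0 \<noteq> Undef" if F: "finite F" "F \<subseteq> ?A" for F
    proof -
      have "\<forall>x\<in>F. \<exists>v. vs (c x) G = Val v"
      proof
        fix x assume "x \<in> F"
        then have xA: "x \<in> ?A" using F by blast
        have "vs (c x) G = vs (c x) (G \<inter> wsupp (c x))"
          by (rule sum.mono_neutral_right) (use G in \<open>auto simp: wsupp_def zero_po_def\<close>)
        moreover have "psum (c x) (wsupp (c x)) \<noteq> None" using cW xA unfolding isW_def by blast
        then have "vs (c x) (G \<inter> wsupp (c x)) \<noteq> Undef" using G unfolding psum_defined by simp
        ultimately show "\<exists>v. vs (c x) G = Val v" by (metis po.exhaust)
      qed
      then obtain s where s: "\<forall>x\<in>F. vs (c x) G = Val (s x)" by metis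
      have "sum (\<lambda>y. vs (\<lambda>x. m x * c x y) F) G = sum (\<lambda>x. sum (\<lambda>y. Val (m x * c x y)) G) F"
        by (rule sum.swap)
      also have "\<dots> = vs (\<lambda>x. m x * s x) F"
        by (rule sum.cong) (auto simp: s vs_distrib_left)
      finally have "sum (\<lambda>y. vs (\<lambda>x. m x * c x y) F) G = vs (\<lambda>x. m x * s x) F" .
      then show ?thesis using K[OF hm F, of s] by simp
    qed
    have "vs r G + 0 \<noteq> Undef" by (rule L[OF rr G]) (use prem in blast)
    then show ?thesis by simp
  qed
  then have "psum r (wsupp r) \<noteq> None" unfolding psum_defined by blast
  then have "isW r" using cr unfolding isW_def by blast
  then have "wbind c m = Some r" by (intro wbind_SomeI) (use rr in auto)
  then show ?thesis using rr by blast
qed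



definition Inv :: "'v state set \<Rightarrow> ('v, 'a::psemiring) den \<Rightarrow> bool" where
  "Inv P c \<longleftrightarrow> (\<forall>s t. c s t \<noteq> 0 \<longrightarrow> (s \<in> P \<longleftrightarrow> t \<in> P))"

lemma psum_definedI:
  fixes g :: "'b \<Rightarrow> 'a::cont_psemiring"
  assumes "\<And>F. finite F \<Longrightarrow> F \<subseteq> A \<Longrightarrow> vs g F \<noteq> Undef"
  shows "psum g A \<noteq> None"
  using assms psum_defined[of g A] by simp

lemma isW_eta: "isW (eta s :: 'b \<Rightarrow> 'a::cont_psemiring)"
proof -
  have sub: "wsupp (eta s :: 'b \<Rightarrow> 'a) \<subseteq> {s}" unfolding wsupp_def eta_def by auto
  then have c: "countable (wsupp (eta s :: 'b \<Rightarrow> 'a))" by (rule countable_subset) simp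
  have v: "vs (eta s :: 'b \<Rightarrow> 'a) F \<noteq> Undef" if "F \<subseteq> wsupp (eta s :: 'b \<Rightarrow> 'a)" for F
  proof -
    have "F = {} \<or> F = {s}" by (rule subset_singletonD[OF subset_trans[OF that sub]])
    then show ?thesis
    proof
      assume "F = {}" then show ?thesis by (simp add: zero_po_def)
    next
      assume "F = {s}" then show ?thesis by simp
    qed
  qed
  have "psum (eta s :: 'b \<Rightarrow> 'a) (wsupp (eta s :: 'b \<Rightarrow> 'a)) \<noteq> None"
    by (rule psum_definedI) (rule v)
  then show ?thesis using c unfolding isW_def by simp
qed

lemma wbind_SomeD:
  assumes "wbind f m = Some r"
  shows "isW r \<and> (\<forall>y. psum (\<lambda>x. m x * f x y) (wsupp m) = Some (r y))"
proof -
  have a: "\<forall>y. psum (\<lambda>x. m x * f x y) (wsupp m) \<noteq> None"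
    using assms unfolding wbind_def by (metis option.distinct(1))
  then have "r = (\<lambda>y. the (psum (\<lambda>x. m x * f x y) (wsupp m)))" "isW r"
    using assms unfolding wbind_def Let_def by (auto split: if_splits)
  then show ?thesis using a by auto
qed

lemma wplus_SomeD:
  assumes "wplus m1 m2 = Some r"
  shows "isW r \<and> (\<forall>x. pplus (m1 x) (m2 x) = Some (r x))"
proof -
  have a: "\<forall>x. pplus (m1 x) (m2 x) \<noteq> None"
    using assms unfolding wplus_def by (metis option.distinct(1))
  then have "r = (\<lambda>x. the (pplus (m1 x) (m2 x)))" "isW r"
    using assms unfolding wplus_def Let_def by (auto split: if_splits)
  then show ?thesis using a by auto
qed

lemma wplus_SomeI:
  assumes "\<forall>x. pplus (m1 x) (m2 x) = Some (r x)" "isW r"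
  shows "wplus m1 m2 = Some r"
proof -
  have "(\<lambda>x. the (pplus (m1 x) (m2 x))) = r" using assms(1) by auto
  then show ?thesis using assms unfolding wplus_def Let_def by auto
qed

lemma phi_Some_iff: "phi e e' c f = Some f \<longleftrightarrow> (\<forall>s. phi_step e e' c f s = Some (f s))"
proof
  assume a: "phi e e' c f = Some f"
  then have n: "\<forall>s. phi_step e e' c f s \<noteq> None" unfolding phi_def by (metis option.distinct(1))
  then have "(\<lambda>s. the (phi_step e e' c f s)) = f" using a unfolding phi_def by simp
  then show "\<forall>s. phi_step e e' c f s = Some (f s)" using n by (metis option.collapse)
next
  assume a: "\<forall>s. phi_step e e' c f s = Some (f s)"
  then show "phi e e' c f = Some f" unfolding phi_def by simp
qed

lemma phi_step_Some_iff: "phi_step e e' c f s = Some v \<longleftrightarrow>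
   (\<exists>mf. wbind f (c s) = Some mf \<and> wplus (wscale (geval e s) mf) (wscale (geval e' s) (eta s)) = Some v)"
  unfolding phi_step_def by (auto split: option.splits)

lemma fle_antisym: "fle f g \<Longrightarrow> fle g f \<Longrightarrow> f = (g :: ('v, 'a::psemiring) den)"
  unfolding fle_def by (intro ext) (meson nle_antisym)

lemma loop_sem_SomeD:
  assumes "loop_sem e e' c = Some f"
  shows "(\<forall>s. isW (f s)) \<and> phi e e' c f = Some f \<and>
         (\<forall>g. (\<forall>s. isW (g s)) \<and> phi e e' c g = Some g \<longrightarrow> fle f g)"
proof -
  define FP where "FP = {f. (\<forall>s. isW (f s)) \<and> phi e e' c f = Some f}"
  have ex: "\<exists>f\<in>FP. \<forall>g\<in>FP. fle f g" and fdef: "f = (THE f. f \<in> FP \<and> (\<forall>g\<in>FP. fle f g))"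
    using assms unfolding loop_sem_def Let_def FP_def[symmetric] by (auto split: if_splits)
  obtain f0 where f0: "f0 \<in> FP" "\<forall>g\<in>FP. fle f0 g" using ex by blast
  have "\<exists>!f. f \<in> FP \<and> (\<forall>g\<in>FP. fle f g)"
  proof (rule ex1I[of _ f0])
    show "f0 \<in> FP \<and> (\<forall>g\<in>FP. fle f0 g)" using f0 by simp
  next
    fix f' assume f': "f' \<in> FP \<and> (\<forall>g\<in>FP. fle f' g)"
    then have "fle f' f0" "fle f0 f'" using f0 by auto
    then show "f' = f0" by (rule fle_antisym)
  qed
  then have "f \<in> FP \<and> (\<forall>g\<in>FP. fle f g)" unfolding fdef by (rule theI')
  then show ?thesis unfolding FP_def by blast
qed

lemma free_upd:
  assumes "x \<notin> free P"
  shows "s(x := v) \<in> P \<longleftrightarrow> s \<in> P"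
proof -
  have A: "\<forall>s\<in>P. \<forall>v::int. s(x := v) \<in> P" using assms unfolding free_def by auto
  show ?thesis
  proof
    assume "s \<in> P" then show "s(x := v) \<in> P" using A by simp
  next
    assume "s(x := v) \<in> P"
    then have "(s(x := v))(x := s x) \<in> P" using A by blast
    then show "s \<in> P" by simp
  qed
qed

lemma inv_main:
  fixes C :: "('v, 'a::cont_psemiring) prog"
  shows "sem C = Some c \<Longrightarrow> free P \<inter> modv C = {} \<Longrightarrow> (\<forall>s. isW (c s)) \<and> Inv P c"
proof (induction C arbitrary: c)
  case Skip
  then have c: "c = eta" by simp
  have "Inv P c" unfolding Inv_def c eta_def by auto
  then show ?case using c isW_eta by auto
next
  case (Assign x E)
  then have c: "c = (\<lambda>s. eta (s(x := eeval E s)))" and xf: "x \<notin> free P" by auto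
  have "Inv P c" unfolding Inv_def c eta_def using free_upd[OF xf] by (auto split: if_splits)
  then show ?case using c isW_eta by auto
next
  case (Assume e)
  then have c: "c = (\<lambda>s. wscale (geval e s) (eta s))" and w: "\<forall>s. isW (wscale (geval e s) (eta s))"
    by (auto split: if_splits)
  have "Inv P c" unfolding Inv_def c wscale_def eta_def by (auto simp: ps_mult_zero_right)
  then show ?case using c w by auto
next
  case (Seq C1 C2)
  obtain c1 where s1: "sem C1 = Some c1" using Seq.prems(1) by (cases "sem C1") auto
  obtain c2 where s2: "sem C2 = Some c2" using Seq.prems(1) s1 by (cases "sem C2") auto
  have h: "(if \<forall>s. wbind c2 (c1 s) \<noteq> None then Some (\<lambda>s. the (wbind c2 (c1 s))) else None) = Some c"
    using Seq.prems(1) s1 s2 by simp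
  have nn: "\<forall>s. wbind c2 (c1 s) \<noteq> None"
  proof (rule ccontr)
    assume na: "\<not> (\<forall>s. wbind c2 (c1 s) \<noteq> None)"
    show False using h unfolding if_not_P[OF na] by simp
  qed
  then have c: "c = (\<lambda>s. the (wbind c2 (c1 s)))" using h unfolding if_P[OF nn] by simp
  have f1: "free P \<inter> modv C1 = {}" and f2: "free P \<inter> modv C2 = {}" using Seq.prems(2) by auto
  have i1: "Inv P c1" using Seq.IH(1)[OF s1 f1] by (rule conjunct2)
  have i2: "Inv P c2" using Seq.IH(2)[OF s2 f2] by (rule conjunct2)
  have wb: "wbind c2 (c1 s) = Some (c s)" for s
  proof -
    have "wbind c2 (c1 s) \<noteq> None" using nn by blast
    then show ?thesis unfolding c by auto
  qed
  have "Inv P c" unfolding Inv_def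
  proof (intro allI impI)
    fix s t assume "c s t \<noteq> 0"
    moreover have "psum (\<lambda>x. c1 s x * c2 x t) (wsupp (c1 s)) = Some (c s t)"
      using wbind_SomeD[OF wb[of s]] by blast
    ultimately obtain x where "x \<in> wsupp (c1 s)" "c1 s x * c2 x t \<noteq> 0"
      using psum_nonzero by blast
    then have "c1 s x \<noteq> 0" "c2 x t \<noteq> 0" by (auto simp: ps_mult_zero_left ps_mult_zero_right)
    then show "s \<in> P \<longleftrightarrow> t \<in> P" using i1 i2 unfolding Inv_def by blast
  qed
  then show ?case using wbind_SomeD[OF wb] by blast
next
  case (Choice C1 C2)
  obtain c1 where s1: "sem C1 = Some c1" using Choice.prems(1) by (cases "sem C1") auto
  obtain c2 where s2: "sem C2 = Some c2" using Choice.prems(1) s1 by (cases "sem C2") auto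
  have h: "(if \<forall>s. wplus (c1 s) (c2 s) \<noteq> None then Some (\<lambda>s. the (wplus (c1 s) (c2 s))) else None) = Some c"
    using Choice.prems(1) s1 s2 by simp
  have nn: "\<forall>s. wplus (c1 s) (c2 s) \<noteq> None"
  proof (rule ccontr)
    assume na: "\<not> (\<forall>s. wplus (c1 s) (c2 s) \<noteq> None)"
    show False using h unfolding if_not_P[OF na] by simp
  qed
  then have c: "c = (\<lambda>s. the (wplus (c1 s) (c2 s)))" using h unfolding if_P[OF nn] by simp
  have f1: "free P \<inter> modv C1 = {}" and f2: "free P \<inter> modv C2 = {}" using Choice.prems(2) by auto
  have i1: "Inv P c1" using Choice.IH(1)[OF s1 f1] by (rule conjunct2)
  have i2: "Inv P c2" using Choice.IH(2)[OF s2 f2] by (rule conjunct2)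
  have wb: "wplus (c1 s) (c2 s) = Some (c s)" for s
  proof -
    have "wplus (c1 s) (c2 s) \<noteq> None" using nn by blast
    then show ?thesis unfolding c by auto
  qed
  have "Inv P c" unfolding Inv_def
  proof (intro allI impI)
    fix s t assume nz: "c s t \<noteq> 0"
    have "pplus (c1 s t) (c2 s t) = Some (c s t)" using wplus_SomeD[OF wb[of s]] by blast
    have "c1 s t \<noteq> 0 \<or> c2 s t \<noteq> 0"
    proof (rule ccontr)
      assume "\<not> (c1 s t \<noteq> 0 \<or> c2 s t \<noteq> 0)"
      then have z: "c1 s t = 0" "c2 s t = 0" by auto
      have "pplus (c1 s t) (c2 s t) = Some 0" unfolding z by (rule pplus_zero)
      then show False using nz \<open>pplus (c1 s t) (c2 s t) = Some (c s t)\<close> by simp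
    qed
    then show "s \<in> P \<longleftrightarrow> t \<in> P" using i1 i2 unfolding Inv_def by blast
  qed
  then show ?case using wplus_SomeD[OF wb] by blast
next
  case (Loop C0 e e')
  obtain c0 where s0: "sem C0 = Some c0" using Loop.prems(1) by (cases "sem C0") auto
  have ls: "loop_sem e e' c0 = Some c" using Loop.prems(1) s0 by simp
  have f0: "free P \<inter> modv C0 = {}" using Loop.prems(2) by simp
  have IH: "(\<forall>s. isW (c0 s)) \<and> Inv P c0" by (rule Loop.IH[OF s0 f0])
  note L = loop_sem_SomeD[OF ls]
  define g where "g s t = (if (s \<in> P \<longleftrightarrow> t \<in> P) then c s t else 0)" for s t
  have gW: "isW (g s)" for s unfolding g_def by (rule isW_restrict) (use L in blast)
  have "phi_step e e' c0 g s = Some (g s)" for s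
  proof -
    obtain mf where mf: "wbind c (c0 s) = Some mf"
      and wp: "wplus (wscale (geval e s) mf) (wscale (geval e' s) (eta s)) = Some (c s)"
      using L unfolding phi_Some_iff phi_step_Some_iff by blast
    note mfD = wbind_SomeD[OF mf]
    define mg where "mg y = (if (s \<in> P \<longleftrightarrow> y \<in> P) then mf y else 0)" for y
    have ps: "psum (\<lambda>x. c0 s x * g x y) (wsupp (c0 s)) = Some (mg y)" for y
    proof (cases "s \<in> P \<longleftrightarrow> y \<in> P")
      case True
      have "\<forall>x\<in>wsupp (c0 s). g x y = c x y"
      proof
        fix x assume "x \<in> wsupp (c0 s)"
        then have "c0 s x \<noteq> 0" unfolding wsupp_def by simp
        then have "s \<in> P \<longleftrightarrow> x \<in> P" using IH unfolding Inv_def by blast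
        then have "x \<in> P \<longleftrightarrow> y \<in> P" using True by blast
        then show "g x y = c x y" unfolding g_def by simp
      qed
      then have "psum (\<lambda>x. c0 s x * g x y) (wsupp (c0 s)) = psum (\<lambda>x. c0 s x * c x y) (wsupp (c0 s))"
        by (intro psum_cong) simp
      then show ?thesis using mfD True unfolding mg_def by simp
    next
      case False
      have "\<forall>x\<in>wsupp (c0 s). g x y = 0"
      proof
        fix x assume "x \<in> wsupp (c0 s)"
        then have "c0 s x \<noteq> 0" unfolding wsupp_def by simp
        then have "s \<in> P \<longleftrightarrow> x \<in> P" using IH unfolding Inv_def by blast
        then have "\<not> (x \<in> P \<longleftrightarrow> y \<in> P)" using False by blast
        then show "g x y = 0" unfolding g_def by simp
      qed
      then have "\<forall>x\<in>wsupp (c0 s). c0 s x * g x y = 0" by (simp add: ps_mult_zero_right)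
      then have "psum (\<lambda>x. c0 s x * g x y) (wsupp (c0 s)) = Some 0" by (rule psum_zero)
      then show ?thesis using False unfolding mg_def by simp
    qed
    have mgW: "isW mg" unfolding mg_def by (rule isW_restrict) (use mfD in blast)
    have wg: "wbind g (c0 s) = Some mg" by (rule wbind_SomeI[OF allI[OF ps] mgW])
    have pp: "pplus (geval e s * mg y) (geval e' s * eta s y) = Some (g s y)" for y
    proof (cases "s \<in> P \<longleftrightarrow> y \<in> P")
      case True
      have "pplus (geval e s * mf y) (geval e' s * eta s y) = Some (c s y)"
        using wplus_SomeD[OF wp] unfolding wscale_def by blast
      then show ?thesis using True unfolding mg_def g_def by simp
    next
      case False
      then have "y \<noteq> s" by blast
      then have z: "eta s y = 0" "mg y = 0" "g s y = 0" using False unfolding eta_def mg_def g_def by auto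
      show ?thesis unfolding z ps_mult_zero_right by (rule pplus_zero)
    qed
    have "wplus (wscale (geval e s) mg) (wscale (geval e' s) (eta s)) = Some (g s)"
      unfolding wscale_def by (rule wplus_SomeI[OF allI[OF pp] gW])
    then show ?thesis unfolding phi_step_Some_iff using wg by blast
  qed
  then have phig: "phi e e' c0 g = Some g" unfolding phi_Some_iff by blast
  have "fle c g" by (rule L[THEN conjunct2, THEN conjunct2, rule_format]) (use gW phig in blast)
  have "Inv P c" unfolding Inv_def
  proof (intro allI impI)
    fix s t assume nz: "c s t \<noteq> 0"
    show "s \<in> P \<longleftrightarrow> t \<in> P"
    proof (rule ccontr)
      assume "\<not> (s \<in> P \<longleftrightarrow> t \<in> P)"
      then have "g s t = 0" unfolding g_def by simp
      moreover have "nle (c s t) (g s t)" using \<open>fle c g\<close> unfolding fle_def by blast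
      ultimately have "nle (c s t) 0" by simp
      then have "c s t = 0" using nle_zero nle_antisym by blast
      then show False using nz by simp
    qed
  qed
  then show ?case using L by blast
qed

theorem lemmaC1:
  fixes C :: "('v::countable, 'a::cont_psemiring) prog"
    and P :: "'v state set"
  assumes "well_formed C"
    and "free P \<inter> modv C = {}"
  shows "valid (Box P) C (Box P)"
proof -
  obtain c where sc: "sem C = Some c" using assms(1) unfolding well_formed_def by blast
  have I: "(\<forall>s. isW (c s)) \<and> Inv P c" using inv_main[OF sc assms(2)] .
  have "case wbind c m of None \<Rightarrow> False | Some m' \<Rightarrow> m' \<in> Box P" if m: "m \<in> Box P" for m
  proof -
    have mW: "isW m" and mP: "wsupp m \<subseteq> P" using m unfolding Box_def by auto
    have "\<forall>x\<in>wsupp m. isW (c x)" using I by simp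
    then obtain r where r: "wbind c m = Some r" using wbind_total[OF mW] by blast
    note rD = wbind_SomeD[OF r]
    have "wsupp r \<subseteq> P"
    proof
      fix y assume "y \<in> wsupp r"
      then have "r y \<noteq> 0" unfolding wsupp_def by simp
      moreover have "psum (\<lambda>x. m x * c x y) (wsupp m) = Some (r y)" using rD by blast
      ultimately obtain x where x: "x \<in> wsupp m" "m x * c x y \<noteq> 0" using psum_nonzero by blast
      then have "c x y \<noteq> 0" by (auto simp: ps_mult_zero_right)
      moreover have "x \<in> P" using x mP by blast
      ultimately show "y \<in> P" using I unfolding Inv_def by blast
    qed
    then have "r \<in> Box P" using rD unfolding Box_def by blast
    then show ?thesis using r by simp
  qed
  then have "\<forall>m\<in>Box P. case wbind c m of None \<Rightarrow> False | Some m' \<Rightarrow> m' \<in> Box P" by blast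
  then show ?thesis unfolding valid_def sc option.case .
qed

end
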